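(* Let $\mathfrak{C}$ be a class of groups closed under taking subgroups and finite direct products. If the groups $G$ and $H$ are locally $\mathfrak{C}$ up to powers, then $G\times H$ is locally $\mathfrak{C}$ up to powers.
   Context: A group $\Gamma$ is locally $\mathfrak{C}$ up to powers if for every finite list $\gamma_1,\dots,\gamma_k\in\Gamma$ there are exponents $t_1,\dots,t_k\in\mathbb{N}$ such that $\langle\gamma_1^{t_1},\dots,\gamma_k^{t_k}\rangle$ belongs to $\mathfrak{C}$. *)

theory Defs
  imports "HOL-Algebra.Algebra"
begin

definition locally_up_to_powers :: "('a monoid \<Rightarrow> bool) \<Rightarrow> 'a monoid \<Rightarrow> bool" where
  "locally_up_to_powers C G \<longleftrightarrow>
     (\<forall>(k::nat) (g::nat \<Rightarrow> 'a). (\<forall>i<k. g i \<in> carrier G) \<longrightarrow>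
        (\<exists>t::nat \<Rightarrow> nat. (\<forall>i<k. 0 < t i) \<and>
           C (subgroup_generated G ((\<lambda>i. g i [^]\<^bsub>G\<^esub> t i) ` {..<k}))))"

text \<open>Closure of (the part on one type of) a class of groups under taking subgroups.\<close>
definition subgroup_closed :: "('a monoid \<Rightarrow> bool) \<Rightarrow> bool" where
  "subgroup_closed C \<longleftrightarrow>
     (\<forall>(K::'a monoid) (U::'a set). group K \<and> C K \<and> subgroup U K \<longrightarrow> C (subgroup_generated K U))"

end

theory Submission
  imports Defs
begin

lemma DirProd_pow_pair:
  "(a, b) [^]\<^bsub>G \<times>\<times> H\<^esub> (n::nat) = (a [^]\<^bsub>G\<^esub> n, b [^]\<^bsub>H\<^esub> n)"
  by (induction n) (simp_all add: nat_pow_def)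

lemma pow_in_generated:
  fixes G (structure)
  assumes "group G" "x \<in> carrier G" "x [^]\<^bsub>G\<^esub> (t::nat) \<in> S"
  shows "x [^]\<^bsub>G\<^esub> (t * s) \<in> carrier (subgroup_generated G S)"
proof -
  interpret group G by fact
  have "x [^] t \<in> carrier (subgroup_generated G S)"
    using assms subgroup_generated_subset_carrier_subset[of "{x [^] t}"]
    by (metis Int_iff carrier_subgroup_generated generate.incl nat_pow_closed)
  then have "(x [^] t) [^]\<^bsub>subgroup_generated G S\<^esub> s \<in> carrier (subgroup_generated G S)"
    by (meson group.is_monoid group_subgroup_generated monoid.nat_pow_closed)
  then show ?thesis
    by (simp add: pow_subgroup_generated nat_pow_pow assms)
qed

theorem lemma3p3:
  fixes C\<^sub>G :: "'a monoid \<Rightarrow> bool" and C\<^sub>H :: "'b monoid \<Rightarrow> bool"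
    and C\<^sub>G\<^sub>H :: "('a \<times> 'b) monoid \<Rightarrow> bool"
    and G :: "'a monoid" and H :: "'b monoid"
  assumes "subgroup_closed C\<^sub>G" and "subgroup_closed C\<^sub>H" and "subgroup_closed C\<^sub>G\<^sub>H"
    and "\<And>A B. group A \<Longrightarrow> group B \<Longrightarrow> C\<^sub>G A \<Longrightarrow> C\<^sub>H B \<Longrightarrow> C\<^sub>G\<^sub>H (A \<times>\<times> B)"
    and "group G" and "group H"
    and "locally_up_to_powers C\<^sub>G G" and "locally_up_to_powers C\<^sub>H H"
  shows "locally_up_to_powers C\<^sub>G\<^sub>H (G \<times>\<times> H)"
  unfolding locally_up_to_powers_def
proof (intro allI impI)
  fix k :: nat and g :: "nat \<Rightarrow> 'a \<times> 'b"
  assume gk: "\<forall>i<k. g i \<in> carrier (G \<times>\<times> H)"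
  interpret G: group G by fact
  interpret H: group H by fact
  have grpP: "group (G \<times>\<times> H)" using assms(5,6) by (rule DirProd_group)
  interpret P: group "G \<times>\<times> H" by (rule grpP)
  have ga: "\<forall>i<k. fst (g i) \<in> carrier G" and gb: "\<forall>i<k. snd (g i) \<in> carrier H"
    using gk by (auto simp: mem_Times_iff)
  obtain t :: "nat \<Rightarrow> nat" where t0: "\<forall>i<k. 0 < t i"
    and tC: "C\<^sub>G (subgroup_generated G ((\<lambda>i. fst (g i) [^]\<^bsub>G\<^esub> t i) ` {..<k}))"
    using assms(7)[unfolded locally_up_to_powers_def, rule_format, of k "\<lambda>i. fst (g i)", OF ga[rule_format]]
    by blast
  obtain s :: "nat \<Rightarrow> nat" where s0: "\<forall>i<k. 0 < s i"
    and sC: "C\<^sub>H (subgroup_generated H ((\<lambda>i. snd (g i) [^]\<^bsub>H\<^esub> s i) ` {..<k}))"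
    using assms(8)[unfolded locally_up_to_powers_def, rule_format, of k "\<lambda>i. snd (g i)", OF gb[rule_format]]
    by blast
  define A where "A = subgroup_generated G ((\<lambda>i. fst (g i) [^]\<^bsub>G\<^esub> t i) ` {..<k})"
  define B where "B = subgroup_generated H ((\<lambda>i. snd (g i) [^]\<^bsub>H\<^esub> s i) ` {..<k})"
  define K where "K = A \<times>\<times> B"
  define Z where "Z = (\<lambda>i. g i [^]\<^bsub>G \<times>\<times> H\<^esub> (t i * s i)) ` {..<k}"
  have grpA: "group A" unfolding A_def by simp
  have grpB: "group B" unfolding B_def by simp
  have grpK: "group K" unfolding K_def using grpA grpB by (rule DirProd_group)
  have CK: "C\<^sub>G\<^sub>H K" unfolding K_def using assms(4) grpA grpB tC sC A_def B_def by blast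
  have subA: "subgroup (carrier A) G" unfolding A_def by (rule G.subgroup_subgroup_generated)
  have subB: "subgroup (carrier B) H" unfolding B_def by (rule H.subgroup_subgroup_generated)
  have subAB: "subgroup (carrier A \<times> carrier B) (G \<times>\<times> H)"
    using DirProd_subgroups[OF assms(5) subA assms(6) subB] .
  have Keq: "K = (G \<times>\<times> H)\<lparr>carrier := carrier A \<times> carrier B\<rparr>"
    unfolding K_def A_def B_def by (simp add: DirProd_def subgroup_generated_def)
  have ZK: "Z \<subseteq> carrier A \<times> carrier B"
  proof
    fix z assume "z \<in> Z"
    then obtain i where i: "i < k" and z: "z = g i [^]\<^bsub>G \<times>\<times> H\<^esub> (t i * s i)"
      unfolding Z_def by blast
    obtain a b where gi: "g i = (a, b)" by fastforce
    have a: "a \<in> carrier G" and b: "b \<in> carrier H" using ga gb i gi by (metis fst_conv snd_conv)+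
    have "a [^]\<^bsub>G\<^esub> (t i * s i) \<in> carrier A"
    proof -
      have "a [^]\<^bsub>G\<^esub> t i \<in> (\<lambda>i. fst (g i) [^]\<^bsub>G\<^esub> t i) ` {..<k}"
        using i gi by force
      then show ?thesis unfolding A_def by (rule pow_in_generated[OF assms(5) a])
    qed
    moreover have "b [^]\<^bsub>H\<^esub> (s i * t i) \<in> carrier B"
    proof -
      have "b [^]\<^bsub>H\<^esub> s i \<in> (\<lambda>i. snd (g i) [^]\<^bsub>H\<^esub> s i) ` {..<k}"
        using i gi by force
      then show ?thesis unfolding B_def by (rule pow_in_generated[OF assms(6) b])
    qed
    ultimately show "z \<in> carrier A \<times> carrier B"
      using z gi by (simp add: DirProd_pow_pair mult.commute)
  qed
  have ZP: "Z \<subseteq> carrier (G \<times>\<times> H)" using ZK subAB subgroup.subset by blast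
  define U where "U = generate K Z"
  have UK: "U = generate (G \<times>\<times> H) Z"
    unfolding U_def Keq using P.generate_consistent[OF ZK subAB] .
  have Ucarr: "carrier K \<inter> Z = Z" using ZK Keq by auto
  have subU: "subgroup U K" unfolding U_def
    using group.generate_is_subgroup[OF grpK] Ucarr by (metis Int_lower1)
  have "C\<^sub>G\<^sub>H (subgroup_generated K U)"
    using assms(3) grpK CK subU unfolding subgroup_closed_def by blast
  moreover have "subgroup_generated K U = subgroup_generated (G \<times>\<times> H) Z"
  proof -
    have "carrier (subgroup_generated K U) = U"
      using subgroup.carrier_subgroup_generated_subgroup[OF subU] .
    then have "subgroup_generated K U = K\<lparr>carrier := U\<rparr>"
      by (simp add: subgroup_generated_def)
    also have "\<dots> = (G \<times>\<times> H)\<lparr>carrier := U\<rparr>" by (simp add: Keq)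
    also have "\<dots> = subgroup_generated (G \<times>\<times> H) Z"
      using ZP UK by (simp add: subgroup_generated_def Int_absorb1)
    finally show ?thesis .
  qed
  ultimately have CZ: "C\<^sub>G\<^sub>H (subgroup_generated (G \<times>\<times> H) Z)" by simp
  have pos: "\<forall>i<k. 0 < t i * s i" using t0 s0 by simp
  show "\<exists>t::nat\<Rightarrow>nat. (\<forall>i<k. 0 < t i) \<and>
          C\<^sub>G\<^sub>H (subgroup_generated (G \<times>\<times> H) ((\<lambda>i. g i [^]\<^bsub>G \<times>\<times> H\<^esub> t i) ` {..<k}))"
    apply (rule exI[of _ "\<lambda>i. t i * s i"])
    apply (rule conjI[OF pos])
    using CZ unfolding Z_def .
qed

end
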